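(* Let $m,n$ be positive integers, $U\subseteq\mathbb{R}^{m\times n}$ a non-empty open set, and $f_k:U\to\mathbb{R}^{m\times n}$, $k\ge1$, a sequence of injective continuous functions. Then $\bigcap_{k\ge1}f_k^{-1}(\mathscr{L}_{m,n})\cap\mathscr{L}_{m,n}$ is a dense $G_\delta$ subset of $U$; in particular there is a dense $G_\delta$ subset $\Omega$ of $U$ with $\Omega\subseteq\mathscr{L}_{m,n}$ and $f_k(A)\in\mathscr{L}_{m,n}$ for all $A\in\Omega$ and all $k\ge1$.
   Context: $\Vert\cdot\Vert$ is the supremum norm; a real $m\times n$ matrix $A$ is a Liouville matrix if $A\mathbf{q}-\mathbf{p}\neq\mathbf{0}$ for all nonzero $(\mathbf{q},\mathbf{p})\in\mathbb{Z}^n\times\mathbb{Z}^m$ and for every $N$ there exist $\mathbf{p}\in\mathbb{Z}^m$, $\mathbf{q}\in\mathbb{Z}^n\setminus\{\mathbf{0}\}$ with $\Vert A\mathbf{q}-\mathbf{p}\Vert<\Vert\mathbf{q}\Vert^{-N}$; $\mathscr{L}_{m,n}$ is the set of these. $\mathbb{R}^{m\times n}$ carries the topology of $\mathbb{R}^{mn}$. *)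

theory Defs
  imports "HOL-Analysis.Analysis"
begin

definition int_vec :: "real^'k \<Rightarrow> bool" where
  "int_vec v \<longleftrightarrow> (\<forall>i. v $ i \<in> \<int>)"

text \<open>Liouville matrices: real m x n matrices, as real^'n^'m (m rows, n columns);
  the norm is the supremum norm infnorm.\<close>
definition liouville_matrices :: "(real^'n^'m) set" where
  "liouville_matrices = {A.
     (\<forall>q p. int_vec q \<and> int_vec p \<and> (q \<noteq> 0 \<or> p \<noteq> 0) \<longrightarrow> A *v q - p \<noteq> 0) \<and>
     (\<forall>N::nat. \<exists>p q. int_vec p \<and> int_vec q \<and> q \<noteq> 0 \<and>
        infnorm (A *v q - p) < infnorm q powr (- real N))}"

definition gdelta :: "'a::topological_space set \<Rightarrow> bool" where
  "gdelta S \<longleftrightarrow> (\<exists>F::nat \<Rightarrow> 'a set. (\<forall>k. open (F k)) \<and> S = (\<Inter>k. F k))"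

end

theory Submission
  imports Defs
begin


lemma cont_infnorm: "continuous_on UNIV (infnorm :: 'a::euclidean_space \<Rightarrow> real)"
proof -
  have "1-lipschitz_on UNIV (infnorm :: 'a \<Rightarrow> real)"
  proof (rule lipschitz_onI)
    fix x y :: 'a
    show "dist (infnorm x) (infnorm y) \<le> 1 * dist x y"
      using absdiff_infnorm[of x y] infnorm_le_norm[of "x - y"] by (simp add: dist_norm dist_real_def)
  qed simp
  then show ?thesis by (rule lipschitz_on_continuous_on)
qed

lemma cont_mv: "continuous_on UNIV (\<lambda>A::real^'n^'m. infnorm (A *v q - p))"
proof -
  have "continuous_on UNIV (\<lambda>A::real^'n^'m. A *v q - p)"
    unfolding matrix_vector_mult_def
    by (intro continuous_intros continuous_on_vec_lambda)
  then show ?thesis using continuous_on_compose2[OF cont_infnorm] by fastforce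
qed

lemma dense_pre:
  fixes U :: "'a::euclidean_space set" and g :: "'a \<Rightarrow> 'a"
  assumes U: "open U" and gc: "continuous_on U g" and gi: "inj_on g U" and D: "open D" "closure D = UNIV"
  shows "open ((U \<inter> g -` D) \<union> - closure U) \<and> closure ((U \<inter> g -` D) \<union> - closure U) = UNIV"
proof
  define T where "T = (U \<inter> g -` D) \<union> - closure U"
  have "open (g -` D \<inter> U)" using continuous_on_open_vimage[OF U] gc D by auto
  then have oT: "open T" unfolding T_def by (auto simp: Int_commute intro!: open_Un)
  then show "open ((U \<inter> g -` D) \<union> - closure U)" by (simp add: T_def)
  have meet: "V \<inter> T \<noteq> {}" if V: "open V" "V \<noteq> {}" for V
  proof (cases "V \<inter> U = {}")
    case True
    then have "V \<inter> closure U = {}" using open_Int_closure_eq_empty[OF V(1)] by auto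
    then have "V \<subseteq> T" unfolding T_def by auto
    then show ?thesis using V by auto
  next
    case False
    have oW: "open (V \<inter> U)" using V U by auto
    have c1: "continuous_on (V \<inter> U) g" using gc continuous_on_subset by blast
    have i1: "inj_on g (V \<inter> U)" using gi inj_on_subset by blast
    have "open (g ` (V \<inter> U))" using invariance_of_domain[OF c1 oW i1] .
    moreover have "g ` (V \<inter> U) \<inter> closure D \<noteq> {}" using False D by auto
    ultimately have "g ` (V \<inter> U) \<inter> D \<noteq> {}" using open_Int_closure_eq_empty by blast
    then show ?thesis unfolding T_def by auto
  qed
  show "closure T = UNIV"
  proof (rule ccontr)
    assume "closure T \<noteq> UNIV"
    then have "- closure T \<noteq> {}" by auto
    moreover have "(- closure T) \<inter> T = {}" using closure_subset by auto
    ultimately show False using meet[of "- closure T"] by auto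
  qed
qed



lemma floor_lim: "(\<lambda>K. of_int \<lfloor>real (Suc K) * a\<rfloor> / real (Suc K)) \<longlonglongrightarrow> (a::real)"
proof (rule real_tendsto_sandwich[where f="\<lambda>K. a - 1 / real (Suc K)" and h="\<lambda>K. a"])
  show "\<forall>\<^sub>F K in sequentially. a - 1 / real (Suc K) \<le> of_int \<lfloor>real (Suc K) * a\<rfloor> / real (Suc K)"
  proof (intro always_eventually allI)
    fix K
    define s where "s = real (Suc K)"
    have s: "s > 0" unfolding s_def by simp
    have "s * a - 1 \<le> of_int \<lfloor>s * a\<rfloor>" by linarith
    then have "(s * a - 1) / s \<le> of_int \<lfloor>s * a\<rfloor> / s" using s by (rule divide_right_mono[OF _ less_imp_le])
    moreover have "(s * a - 1) / s = a - 1 / s" using s by (simp add: field_simps)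
    ultimately show "a - 1 / real (Suc K) \<le> of_int \<lfloor>real (Suc K) * a\<rfloor> / real (Suc K)"
      unfolding s_def by simp
  qed
  show "\<forall>\<^sub>F K in sequentially. of_int \<lfloor>real (Suc K) * a\<rfloor> / real (Suc K) \<le> a"
  proof (intro always_eventually allI)
    fix K
    have "of_int \<lfloor>real (Suc K) * a\<rfloor> \<le> real (Suc K) * a" by linarith
    then show "of_int \<lfloor>real (Suc K) * a\<rfloor> / real (Suc K) \<le> a"
      by (simp add: field_simps del: of_nat_Suc)
  qed
  show "(\<lambda>K. a - 1 / real (Suc K)) \<longlonglongrightarrow> a"
    using tendsto_diff[OF tendsto_const[of a] LIMSEQ_inverse_real_of_nat] by (simp add: inverse_eq_divide)
qed simp

lemma dense_O:
  fixes A :: "real^'n^'m"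
  shows "A \<in> closure {A. \<exists>p q. int_vec p \<and> int_vec q \<and> q \<noteq> 0 \<and> infnorm (A *v q - p) < infnorm q powr - real N}"
proof -
  obtain j0 :: 'n where True by blast
  define y where "y K = (\<chi> i k. if k = j0 then of_int \<lfloor>real (Suc K) * A$i$k\<rfloor> / real (Suc K) else A$i$k)" for K
  have mem: "y K \<in> {A. \<exists>p q. int_vec p \<and> int_vec q \<and> q \<noteq> 0 \<and> infnorm (A *v q - p) < infnorm q powr - real N}" for K
  proof -
    define q :: "real^'n" where "q = (\<chi> k. if k = j0 then real (Suc K) else 0)"
    define p :: "real^'m" where "p = (\<chi> i. of_int \<lfloor>real (Suc K) * A$i$j0\<rfloor>)"
    have iq: "int_vec q" unfolding int_vec_def q_def by auto
    have ip: "int_vec p" unfolding int_vec_def p_def by auto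
    have "q $ j0 \<noteq> 0" unfolding q_def by simp
    then have q0: "q \<noteq> 0" by auto
    have "(y K *v q) $ i = p $ i" for i
    proof -
      have "(y K *v q) $ i = (\<Sum>k\<in>UNIV. if k = j0 then y K $ i $ k * real (Suc K) else 0)"
        unfolding matrix_vector_mult_def q_def by (simp only: vec_lambda_beta, intro sum.cong) auto
      also have "\<dots> = y K $ i $ j0 * real (Suc K)" by simp
      also have "\<dots> = p $ i" unfolding y_def p_def by simp
      finally show ?thesis .
    qed
    then have "y K *v q = p" by (simp add: vec_eq_iff)
    then have "infnorm (y K *v q - p) = 0" by (simp add: infnorm_0)
    moreover have "infnorm q > 0" using q0 infnorm_pos_lt by blast
    ultimately have "infnorm (y K *v q - p) < infnorm q powr - real N" by simp
    then show ?thesis using iq ip q0 by blast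
  qed
  have "y \<longlonglongrightarrow> A"
  proof (rule vec_tendstoI, rule vec_tendstoI)
    fix i k
    show "(\<lambda>K. y K $ i $ k) \<longlonglongrightarrow> A $ i $ k"
      unfolding y_def vec_lambda_beta using floor_lim[of "A$i$k"] by (cases "k = j0") auto
  qed
  then show ?thesis using mem by (intro closure_sequential[THEN iffD2] exI[of _ y]) simp
qed

lemma dense_E:
  fixes A :: "real^'n^'m" and q :: "real^'n"
  assumes "q \<noteq> 0"
  shows "A \<in> closure {A. A *v q - p \<noteq> 0}"
proof (cases "A *v q - p \<noteq> 0")
  case True then show ?thesis by (intro closure_subset[THEN subsetD]) simp
next
  case False
  then have Aq: "A *v q = p" by simp
  obtain j where j: "q $ j \<noteq> 0" using assms by (auto simp: vec_eq_iff)
  define M :: "real^'n^'m" where "M = (\<chi> i k. if k = j then 1 else 0)"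
  define y where "y n = A + (1 / real (Suc n)) *\<^sub>R M" for n
  have comp: "(y n *v q) $ i = (A *v q) $ i + (1 / real (Suc n)) * q $ j" for n i
  proof -
    have "(y n *v q) $ i = (\<Sum>k\<in>UNIV. A $ i $ k * q $ k + (if k = j then (1 / real (Suc n)) * q $ k else 0))"
      unfolding y_def M_def matrix_vector_mult_def by (simp only: vec_lambda_beta, intro sum.cong) (auto simp: algebra_simps)
    also have "\<dots> = (A *v q) $ i + (1 / real (Suc n)) * q $ j"
      unfolding matrix_vector_mult_def sum.distrib by simp
    finally show ?thesis .
  qed
  have mem: "y n \<in> {A. A *v q - p \<noteq> 0}" for n
  proof
    have "(y n *v q - p) $ i \<noteq> 0" for i using comp[of n i] Aq j by simp
    then show "y n *v q - p \<noteq> 0" using zero_index by metis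
  qed
  have "y \<longlonglongrightarrow> A + 0 *\<^sub>R M" unfolding y_def
  proof (intro tendsto_add tendsto_const tendsto_scaleR)
    show "(\<lambda>n. 1 / real (Suc n)) \<longlonglongrightarrow> 0"
      using LIMSEQ_inverse_real_of_nat by (simp add: inverse_eq_divide)
  qed
  then have "y \<longlonglongrightarrow> A" by simp
  then show ?thesis using mem by (intro closure_sequential[THEN iffD2] exI[of _ y]) simp
qed



lemma countable_int_vec: "countable {q :: real^'k. int_vec q}"
proof (rule countable_subset)
  show "{q :: real^'k. int_vec q} \<subseteq> range (\<lambda>g::'k \<Rightarrow> int. \<chi> i. of_int (g i))"
  proof
    fix q :: "real^'k" assume "q \<in> {q. int_vec q}"
    then have "\<forall>i. \<exists>z::int. q $ i = of_int z" unfolding int_vec_def by (auto elim!: Ints_cases)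
    from choice[OF this] obtain g where "\<forall>i. q $ i = of_int (g i)" ..
    then have "q = (\<chi> i. of_int (g i))" by (simp add: vec_eq_iff)
    then show "q \<in> range (\<lambda>g::'k \<Rightarrow> int. \<chi> i. of_int (g i))" by (rule image_eqI[where x=g]) simp_all
  qed
qed simp

lemma liou: "\<exists>\<G>. countable \<G> \<and> \<G> \<noteq> {} \<and> (\<forall>G\<in>\<G>. open G \<and> closure G = UNIV) \<and>
   (liouville_matrices :: (real^'n^'m) set) = \<Inter>\<G>"
proof -
  define On :: "nat \<Rightarrow> (real^'n^'m) set" where "On N = {A. \<exists>p q. int_vec p \<and> int_vec q \<and> q \<noteq> 0 \<and> infnorm (A *v q - p) < infnorm q powr - real N}" for N
  define E :: "(real^'n) \<times> (real^'m) \<Rightarrow> (real^'n^'m) set" where "E = (\<lambda>(q,p). {A. A *v q - p \<noteq> 0})"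
  define I where "I = {q :: real^'n. int_vec q \<and> q \<noteq> 0} \<times> {p :: real^'m. int_vec p}"
  define \<G> where "\<G> = range On \<union> E ` I"
  have "countable I" unfolding I_def
    by (intro countable_SIGMA countable_subset[OF _ countable_int_vec]) auto
  then have c: "countable \<G>" unfolding \<G>_def by auto
  have ne: "\<G> \<noteq> {}" unfolding \<G>_def by auto
  have oO: "open (On N)" for N
  proof -
    have "On N = (\<Union>p\<in>{p. int_vec p}. \<Union>q\<in>{q. int_vec q \<and> q \<noteq> 0}. {A. infnorm (A *v q - p) < infnorm q powr - real N})"
      unfolding On_def by auto
    also have "open \<dots>"
      by (intro open_UN ballI open_Collect_less cont_mv continuous_on_const)
    finally show ?thesis .
  qed
  have oE: "open (E x)" for x
  proof -
    obtain q p where x: "x = (q,p)" by fastforce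
    have "E x = {A. 0 < infnorm (A *v q - p)}" by (simp add: E_def x infnorm_pos_lt)
    also have "open \<dots>" by (intro open_Collect_less cont_mv continuous_on_const)
    finally show ?thesis .
  qed
  have dO: "closure (On N) = UNIV" for N
  proof -
    have "A \<in> closure (On N)" for A unfolding On_def by (rule dense_O)
    then show ?thesis by auto
  qed
  have dE: "closure (E x) = UNIV" if "x \<in> I" for x
  proof -
    obtain q p where x: "x = (q,p)" by fastforce
    have "q \<noteq> 0" using that unfolding x I_def by simp
    then have "A \<in> closure (E x)" for A unfolding x E_def using dense_E[of q A p] by simp
    then show ?thesis by auto
  qed
  have L: "(liouville_matrices :: (real^'n^'m) set) = \<Inter>\<G>"
  proof (intro set_eqI iffI)
    fix A :: "real^'n^'m" assume A: "A \<in> liouville_matrices"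
    show "A \<in> \<Inter>\<G>" using A unfolding \<G>_def liouville_matrices_def On_def E_def I_def by auto
  next
    fix A :: "real^'n^'m" assume A: "A \<in> \<Inter>\<G>"
    then have AO: "\<forall>N. A \<in> On N" and AE: "\<forall>x\<in>I. A \<in> E x" unfolding \<G>_def by auto
    have "A *v q - p \<noteq> 0" if "int_vec q" "int_vec p" "q \<noteq> 0 \<or> p \<noteq> 0" for q p
    proof (cases "q = 0")
      case True then show ?thesis using that by simp
    next
      case False then show ?thesis using AE that unfolding I_def E_def by auto
    qed
    then show "A \<in> liouville_matrices" using AO unfolding liouville_matrices_def On_def by auto
  qed
  have "\<forall>G\<in>\<G>. open G \<and> closure G = UNIV" unfolding \<G>_def using oO oE dO dE by auto
  then show ?thesis using c ne L by (intro exI[of _ \<G>] conjI)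
qed



theorem theorem3:
  fixes U :: "(real^'n^'m) set" and f :: "nat \<Rightarrow> real^'n^'m \<Rightarrow> real^'n^'m"
  assumes "open U" and "U \<noteq> {}"
    and "\<And>k. k \<ge> 1 \<Longrightarrow> continuous_on U (f k) \<and> inj_on (f k) U"
  defines "\<Omega> \<equiv> (\<Inter>k\<in>{1..}. {A \<in> U. f k A \<in> liouville_matrices}) \<inter> liouville_matrices"
  shows "gdelta \<Omega> \<and> \<Omega> \<subseteq> U \<and> U \<subseteq> closure \<Omega>"
proof -
  obtain \<G> :: "(real^'n^'m) set set" where c: "countable \<G>" and ne: "\<G> \<noteq> {}"
    and od: "\<And>G. G \<in> \<G> \<Longrightarrow> open G \<and> closure G = UNIV"
    and L: "liouville_matrices = \<Inter>\<G>"
    using liou by blast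
  define gs where "gs = insert id (f ` {1..})"
  have gp: "continuous_on U g \<and> inj_on g U" if "g \<in> gs" for g
    using that assms(3) continuous_on_id unfolding gs_def by auto
  define H0 where "H0 = (\<lambda>(g,G). U \<inter> g -` G) ` (gs \<times> \<G>)"
  have cH0: "countable H0" unfolding H0_def gs_def using c by auto
  have neH0: "H0 \<noteq> {}" unfolding H0_def gs_def using ne by auto
  have oH0: "open H" if "H \<in> H0" for H
  proof -
    from that obtain x where x: "x \<in> gs \<times> \<G>" "H = (\<lambda>(g,G). U \<inter> g -` G) x"
      unfolding H0_def by (rule imageE)
    obtain g G where xx: "x = (g, G)" by (cases x)
    have H: "H = U \<inter> g -` G" and g: "g \<in> gs" and G: "G \<in> \<G>" using x unfolding xx by auto
    have "open (g -` G \<inter> U)" using continuous_on_open_vimage[OF assms(1)] gp[OF g] od[OF G] by auto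
    then show ?thesis unfolding H by (simp add: Int_commute)
  qed
  have sub: "\<Omega> \<subseteq> U" unfolding \<Omega>_def by auto
  have eq: "\<Omega> = \<Inter>H0"
  proof (intro set_eqI iffI)
    fix A assume A: "A \<in> \<Omega>"
    then have "A \<in> U" using sub by auto
    moreover have "g A \<in> G" if "g \<in> gs" "G \<in> \<G>" for g G
      using A that unfolding \<Omega>_def gs_def L by auto
    ultimately show "A \<in> \<Inter>H0" unfolding H0_def by auto
  next
    fix A assume A: "A \<in> \<Inter>H0"
    obtain G0 where G0: "G0 \<in> \<G>" using ne by auto
    have AU: "A \<in> U" using A G0 unfolding H0_def gs_def by auto
    have gA: "g A \<in> G" if "g \<in> gs" "G \<in> \<G>" for g G
      using A that unfolding H0_def by auto
    have "A \<in> \<Inter>\<G>" using gA[of id] unfolding gs_def by auto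
    moreover have "f k A \<in> \<Inter>\<G>" if "k \<ge> 1" for k using gA[of "f k"] that unfolding gs_def by auto
    ultimately show "A \<in> \<Omega>" unfolding \<Omega>_def L using AU by auto
  qed
  have gd: "gdelta \<Omega>"
    unfolding gdelta_def
  proof (intro exI[of _ "from_nat_into H0"] conjI allI)
    show "open (from_nat_into H0 k)" for k using oH0 from_nat_into[OF neH0] by blast
    show "\<Omega> = \<Inter> (range (from_nat_into H0))" using range_from_nat_into[OF neH0 cH0] eq by simp
  qed
  define H where "H = (\<lambda>T. T \<union> - closure U) ` H0"
  have "UNIV \<subseteq> closure (\<Inter>H)"
  proof (rule Baire)
    show "countable H" unfolding H_def using cH0 by auto
    fix T assume "T \<in> H"
    then obtain g G where T: "T = (U \<inter> g -` G) \<union> - closure U" and g: "g \<in> gs" and G: "G \<in> \<G>"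
      unfolding H_def H0_def by auto
    have "open T \<and> closure T = UNIV"
      unfolding T using dense_pre[OF assms(1)] gp[OF g] od[OF G] by blast
    then show "openin (top_of_set UNIV) T \<and> UNIV \<subseteq> closure T" by simp
  qed simp
  have "U \<inter> \<Inter>H \<subseteq> \<Inter>H0"
  proof
    fix A assume A: "A \<in> U \<inter> \<Inter>H"
    then have "A \<in> closure U" using closure_subset by auto
    then show "A \<in> \<Inter>H0" using A unfolding H_def by auto
  qed
  then have "closure (U \<inter> \<Inter>H) \<subseteq> closure \<Omega>" using eq closure_mono by metis
  moreover have "U \<subseteq> closure (U \<inter> \<Inter>H)"
    using open_Int_closure_subset[OF assms(1), of "\<Inter>H"] \<open>UNIV \<subseteq> closure (\<Inter>H)\<close> by auto
  ultimately show ?thesis using gd sub by auto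
qed

end
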